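(* Let $n>1$ be a prime power pseudoperfect number such that $n-1$ is prime. Then $n(n-1)$ is a prime power Giuga number.
   Context: A prime power pseudoperfect number is an integer $n>1$ satisfying $\sum_{p^k\mid n}\frac{1}{p^k}+\frac1n=1$, where the sum ranges over all prime powers $p^k$ ($p$ prime, $k\ge1$) dividing $n$. A prime power Giuga number is a composite positive integer $m$ such that $\sum_{p^k\mid m}\frac{1}{p^k}-\frac1m$ is a positive integer, the sum again over all prime powers $p^k$ ($k\ge1$) dividing $m$. *)

theory Defs
  imports "HOL-Number_Theory.Number_Theory"
begin

definition pp_recip_sum :: "nat \<Rightarrow> rat" where
  "pp_recip_sum n = (\<Sum>q\<in>primepow_factors n. 1 / of_nat q)"

definition pp_pseudoperfect :: "nat \<Rightarrow> bool" where
  "pp_pseudoperfect n \<longleftrightarrow> n > 1 \<and> pp_recip_sum n + 1 / of_nat n = 1"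

definition pp_giuga :: "nat \<Rightarrow> bool" where
  "pp_giuga m \<longleftrightarrow> m > 1 \<and> \<not> prime m \<and>
     (\<exists>k::nat. k > 0 \<and> pp_recip_sum m - 1 / of_nat m = of_nat k)"

end

theory Submission
  imports Defs
begin

lemma ppf_mult_prime:
  fixes a p :: nat
  assumes p: "prime p" and nd: "\<not> p dvd a" and a: "a > 0"
  shows "primepow_factors (a * p) = insert p (primepow_factors a)"
proof
  show "primepow_factors (a * p) \<subseteq> insert p (primepow_factors a)"
  proof
    fix q assume "q \<in> primepow_factors (a * p)"
    then have pq: "primepow q" and qd: "q dvd a * p" by (auto simp: primepow_factors_def)
    then obtain r k where r: "prime r" "k > 0" "q = r ^ k" by (auto simp: primepow_def)
    show "q \<in> insert p (primepow_factors a)"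
    proof (cases "r = p")
      case True
      obtain j where k: "k = Suc j" using r(2) by (cases k) auto
      have "p ^ j * p dvd a * p" using qd r True k by (simp add: mult.commute)
      then have "p ^ j dvd a" using p by (simp add: prime_gt_0_nat)
      moreover have "j = 0"
      proof (rule ccontr)
        assume "j \<noteq> 0"
        then have "p dvd p ^ j" by simp
        with \<open>p ^ j dvd a\<close> nd show False using dvd_trans by blast
      qed
      ultimately show ?thesis using r True k by simp
    next
      case False
      then have "coprime r p" using r(1) p by (simp add: primes_coprime)
      then have "coprime q p" using r(3) by simp
      then have "q dvd a" using qd by (metis coprime_dvd_mult_left_iff)
      then show ?thesis using pq by (simp add: primepow_factors_def)
    qed
  qed
next
  show "insert p (primepow_factors a) \<subseteq> primepow_factors (a * p)"
    using p by (auto simp: primepow_factors_def primepow_prime)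
qed

theorem proposition5:
  fixes n :: nat
  assumes "n > 1" and "pp_pseudoperfect n" and "prime (n - 1)"
  shows "pp_giuga (n * (n - 1))"
proof -
  define p where "p = n - 1"
  have p: "prime p" using assms p_def by simp
  have p2: "p \<ge> 2" using p prime_ge_2_nat by blast
  have np: "n = p + 1" using assms p_def by simp
  have nd: "\<not> p dvd n"
  proof
    assume "p dvd n"
    then have "p dvd 1" using np by (metis dvd_add_right_iff dvd_refl)
    with p2 show False by simp
  qed
  have pn: "p \<notin> primepow_factors n"
    using nd by (auto simp: primepow_factors_def)
  have fin: "finite (primepow_factors n)" using assms by (simp add: finite_primepow_factors)
  have S: "pp_recip_sum n + 1 / of_nat n = 1" using assms(2) by (simp add: pp_pseudoperfect_def)
  have "pp_recip_sum (n * p) = pp_recip_sum n + 1 / of_nat p"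
    unfolding pp_recip_sum_def using ppf_mult_prime[OF p nd] assms(1) fin pn by simp
  then have "pp_recip_sum (n * p) - 1 / of_nat (n * p) = 1 - 1 / of_nat n + 1 / of_nat p - 1 / (of_nat n * of_nat p)"
    using S by simp
  also have "\<dots> = (1::rat)"
  proof -
    have "of_nat p > (0::rat)" using p2 by simp
    then show ?thesis using np by (simp add: divide_simps) (simp add: algebra_simps)
  qed
  finally have E: "pp_recip_sum (n * p) - 1 / of_nat (n * p) = of_nat (1::nat)" by simp
  have np1: "n * p > 1" using np p2 by (simp add: less_1_mult)
  have "\<not> prime (n * p)"
  proof
    assume "prime (n * p)"
    then have "n = 1 \<or> p = 1" using prime_product by blast
    with np p2 show False by simp
  qed
  then show ?thesis unfolding pp_giuga_def p_def[symmetric] using E np1 by blast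
qed

end
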